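(* Let $\tilde f$ be analytic on $[-1,1]$, $N\ge0$, and $F^{(N)}=[f_{k,\ell}]$ the $(N+1)$-banded truncated coefficient matrix. For $M\ge1$ let $F^{(N)}_M$ be its $M\times M$ leading principal submatrix. Assume there exist $r<1$ and $M_0$ such that $W(F^{(N)}_M)\subseteq\{z\in\mathbb{C}:|z|\le r\}$ for all $M>M_0$. Then the bounded operator on $\ell^2(\mathbb{N}_0)$ with matrix $I-F^{(N)}$ (with respect to the standard orthonormal basis $e_0,e_1,\dots$) is invertible. Moreover, if $y$ lies in its range and $x$ solves $(I-F^{(N)})x=y$, then the solutions $x_M\in\mathbb{C}^M$ of $(I_M-F^{(N)}_M)x_M=P_My$ (extended by zeros) converge to $x$ in $\ell^2$-norm as $M\to\infty$.
   Context: Let $\{p_k\}_{k\ge0}$ be the orthonormal Legendre polynomials on $[-1,1]$ and $\Theta$ the Heaviside function ($\Theta(x)=0$ for $x<0$, $1$ for $x\ge0$). Write $\tilde f=\sum_{d\ge0}\alpha_dp_d$ with $\alpha_d=\int_{-1}^1\tilde fp_d$. The Legendre basis matrix $B^{(d)}=[b^{(d)}_{k,\ell}]_{k,\ell\ge0}$ has entries $b^{(d)}_{k,\ell}=\int_{-1}^1\int_{-1}^1p_d(\tau)\Theta(\tau-\rho)p_k(\tau)p_\ell(\rho)\,d\rho\,d\tau$, and $F^{(N)}:=\sum_{d=0}^N\alpha_dB^{(d)}$. $P_M$ denotes the orthogonal projection of $\ell^2$ onto the span of $e_0,\dots,e_{M-1}$, identified with $\mathbb{C}^M$. The field of values of a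 square matrix $A$ is $W(A)=\{v^HAv:\|v\|_2=1\}$. *)

theory Defs
  imports "HOL-Analysis.Analysis"
begin

text \<open>Orthonormal Legendre polynomials on [-1,1]:
  p_k = sqrt((2k+1)/2) * P_k, with the classical Legendre polynomial
  P_k(t) = sum_{j=0}^k (k choose j) ((k+j) choose j) ((t-1)/2)^j.\<close>
definition legendre_on :: "nat \<Rightarrow> real \<Rightarrow> real" where
  "legendre_on k t = sqrt ((2 * real k + 1) / 2) *
     (\<Sum>j\<le>k. real (k choose j) * real ((k + j) choose j) * ((t - 1) / 2) ^ j)"

definition heaviside :: "real \<Rightarrow> real" where
  "heaviside x = (if x < 0 then 0 else 1)"

definition leg_coeff :: "(real \<Rightarrow> complex) \<Rightarrow> nat \<Rightarrow> complex" where
  "leg_coeff f d = integral {-1..1} (\<lambda>t. f t * complex_of_real (legendre_on d t))"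

definition basis_entry :: "nat \<Rightarrow> nat \<Rightarrow> nat \<Rightarrow> real" where
  "basis_entry d k l = integral {-1..1} (\<lambda>\<tau>. integral {-1..1} (\<lambda>\<rho>.
      legendre_on d \<tau> * heaviside (\<tau> - \<rho>) * legendre_on k \<tau> * legendre_on l \<rho>))"

definition coeff_matrix :: "(real \<Rightarrow> complex) \<Rightarrow> nat \<Rightarrow> nat \<Rightarrow> nat \<Rightarrow> complex" where
  "coeff_matrix f N k l = (\<Sum>d\<le>N. leg_coeff f d * complex_of_real (basis_entry d k l))"

definition field_of_values :: "nat \<Rightarrow> (nat \<Rightarrow> nat \<Rightarrow> complex) \<Rightarrow> complex set" where
  "field_of_values M A = {(\<Sum>k<M. \<Sum>l<M. cnj (v k) * A k l * v l) | v :: nat \<Rightarrow> complex.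
       (\<Sum>k<M. (cmod (v k))\<^sup>2) = 1}"

definition l2 :: "(nat \<Rightarrow> complex) set" where
  "l2 = {x. summable (\<lambda>n. (cmod (x n))\<^sup>2)}"

definition l2norm :: "(nat \<Rightarrow> complex) \<Rightarrow> real" where
  "l2norm x = sqrt (\<Sum>n. (cmod (x n))\<^sup>2)"

definition id_minus_mat :: "(nat \<Rightarrow> nat \<Rightarrow> complex) \<Rightarrow> (nat \<Rightarrow> complex) \<Rightarrow> nat \<Rightarrow> complex" where
  "id_minus_mat A x k = x k - (\<Sum>l. A k l * x l)"

end

theory Submission
  imports Defs
begin


definition nrm :: "nat \<Rightarrow> (nat \<Rightarrow> complex) \<Rightarrow> real" where
  "nrm M u = L2_set (\<lambda>k. cmod (u k)) {..<M}"

lemma nrm_nonneg[simp]: "0 \<le> nrm M u" by (simp add: nrm_def)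

lemma nrm_sq: "(nrm M u)\<^sup>2 = (\<Sum>k<M. (cmod (u k))\<^sup>2)"
  by (simp add: nrm_def L2_set_def sum_nonneg)

lemma nrm_cong: "(\<And>k. k < M \<Longrightarrow> u k = v k) \<Longrightarrow> nrm M u = nrm M v"
  unfolding nrm_def by (rule L2_set_cong) auto

lemma nrm_triangle: "nrm M (\<lambda>k. u k + v k) \<le> nrm M u + nrm M v"
proof -
  have "nrm M (\<lambda>k. u k + v k) \<le> L2_set (\<lambda>k. cmod (u k) + cmod (v k)) {..<M}"
    unfolding nrm_def by (rule L2_set_mono) (auto simp: norm_triangle_ineq)
  also have "\<dots> \<le> nrm M u + nrm M v" unfolding nrm_def by (rule L2_set_triangle_ineq)
  finally show ?thesis .
qed

lemma nrm_diff: "nrm M (\<lambda>k. u k - v k) \<le> nrm M u + nrm M v"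
proof -
  have "nrm M (\<lambda>k. u k - v k) \<le> L2_set (\<lambda>k. cmod (u k) + cmod (v k)) {..<M}"
    unfolding nrm_def by (rule L2_set_mono) (auto simp: norm_triangle_ineq4)
  also have "\<dots> \<le> nrm M u + nrm M v" unfolding nrm_def by (rule L2_set_triangle_ineq)
  finally show ?thesis .
qed

lemma nrm_scale: "nrm M (\<lambda>k. c * u k) = cmod c * nrm M u"
  unfolding nrm_def by (simp add: L2_set_right_distrib norm_mult)

lemma nrm_minus_commute: "nrm M (\<lambda>k. u k - v k) = nrm M (\<lambda>k. v k - u k)"
  unfolding nrm_def by (simp add: norm_minus_commute)

lemma nrm_mono: "M \<le> M' \<Longrightarrow> nrm M u \<le> nrm M' u"
  unfolding nrm_def L2_set_def
  by (intro real_sqrt_le_mono sum_mono2) auto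

lemma nrm_supp: assumes "\<And>k. k \<ge> L \<Longrightarrow> u k = 0" "L \<le> M" shows "nrm M u = nrm L u"
  unfolding nrm_def L2_set_def
  using assms by (intro arg_cong[where f=sqrt] sum.mono_neutral_right) auto

lemma nrm_supp_le: assumes "\<And>k. k \<ge> L \<Longrightarrow> u k = 0" shows "nrm n u \<le> nrm L u"
proof -
  have "nrm n u \<le> nrm (max n L) u" by (rule nrm_mono) auto
  also have "\<dots> = nrm L u" by (rule nrm_supp[OF assms]) auto
  finally show ?thesis .
qed

lemma coord_le_nrm: "k < M \<Longrightarrow> cmod (u k) \<le> nrm M u"
  unfolding nrm_def by (rule member_le_L2_set) auto

lemma l2_nrm_le: assumes "x \<in> l2" shows "nrm n x \<le> l2norm x"
proof -
  have "(\<Sum>k<n. (cmod (x k))\<^sup>2) \<le> (\<Sum>k. (cmod (x k))\<^sup>2)"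
    using assms by (intro sum_le_suminf) (auto simp: l2_def)
  then show ?thesis unfolding nrm_def L2_set_def l2norm_def by (rule real_sqrt_le_mono)
qed

lemma l2I_bound: assumes "\<And>n. nrm n x \<le> C" shows "x \<in> l2" "l2norm x \<le> C"
proof -
  have C0: "0 \<le> C" using assms[of 0] nrm_nonneg[of 0 x] by linarith
  have b: "(\<Sum>k<n. (cmod (x k))\<^sup>2) \<le> C\<^sup>2" for n
  proof -
    have "(nrm n x)\<^sup>2 \<le> C\<^sup>2" by (rule power_mono[OF assms[of n] nrm_nonneg])
    then show ?thesis by (simp add: nrm_sq)
  qed
  have s: "summable (\<lambda>k. (cmod (x k))\<^sup>2)"
    by (rule summableI_nonneg_bounded[OF _ b]) auto
  then show "x \<in> l2" by (simp add: l2_def)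
  have "(\<Sum>k. (cmod (x k))\<^sup>2) \<le> C\<^sup>2" by (rule suminf_le_const[OF s b])
  then have "sqrt (\<Sum>k. (cmod (x k))\<^sup>2) \<le> sqrt (C\<^sup>2)" by (rule real_sqrt_le_mono)
  then show "l2norm x \<le> C" unfolding l2norm_def using C0 by simp
qed

lemma l2_nrm_lim: assumes "x \<in> l2" shows "(\<lambda>n. nrm n x) \<longlonglongrightarrow> l2norm x"
proof -
  have "(\<lambda>n. \<Sum>k<n. (cmod (x k))\<^sup>2) \<longlonglongrightarrow> (\<Sum>k. (cmod (x k))\<^sup>2)"
    using assms by (intro summable_LIMSEQ) (simp add: l2_def)
  then have "(\<lambda>n. sqrt (\<Sum>k<n. (cmod (x k))\<^sup>2)) \<longlonglongrightarrow> sqrt (\<Sum>k. (cmod (x k))\<^sup>2)"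
    by (rule tendsto_real_sqrt)
  then show ?thesis by (simp add: nrm_def L2_set_def l2norm_def)
qed

lemma l2norm_nonneg[simp]: "x \<in> l2 \<Longrightarrow> 0 \<le> l2norm x"
  by (simp add: l2norm_def l2_def suminf_nonneg)

lemma coord_le_l2norm: "x \<in> l2 \<Longrightarrow> cmod (x k) \<le> l2norm x"
  using coord_le_nrm[of k "Suc k" x] l2_nrm_le[of x "Suc k"] by simp

lemma l2_zero: "x \<in> l2 \<Longrightarrow> l2norm x \<le> 0 \<Longrightarrow> x k = 0"
  using coord_le_l2norm[of x k] by (metis norm_le_zero_iff order_trans)

lemma l2_add: assumes "x \<in> l2" "y \<in> l2"
  shows "(\<lambda>k. x k + y k) \<in> l2" "l2norm (\<lambda>k. x k + y k) \<le> l2norm x + l2norm y"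
proof -
  have "nrm n (\<lambda>k. x k + y k) \<le> l2norm x + l2norm y" for n
    using nrm_triangle[of n x y] l2_nrm_le[OF assms(1), of n] l2_nrm_le[OF assms(2), of n] by linarith
  then show "(\<lambda>k. x k + y k) \<in> l2" "l2norm (\<lambda>k. x k + y k) \<le> l2norm x + l2norm y"
    using l2I_bound by blast+
qed

lemma l2_diff: assumes "x \<in> l2" "y \<in> l2"
  shows "(\<lambda>k. x k - y k) \<in> l2" "l2norm (\<lambda>k. x k - y k) \<le> l2norm x + l2norm y"
proof -
  have "nrm n (\<lambda>k. x k - y k) \<le> l2norm x + l2norm y" for n
    using nrm_diff[of n x y] l2_nrm_le[OF assms(1), of n] l2_nrm_le[OF assms(2), of n] by linarith
  then show "(\<lambda>k. x k - y k) \<in> l2" "l2norm (\<lambda>k. x k - y k) \<le> l2norm x + l2norm y"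
    using l2I_bound by blast+
qed

lemma l2_scale: assumes "x \<in> l2"
  shows "(\<lambda>k. c * x k) \<in> l2" "l2norm (\<lambda>k. c * x k) \<le> cmod c * l2norm x"
proof -
  have "nrm n (\<lambda>k. c * x k) \<le> cmod c * l2norm x" for n
    using l2_nrm_le[OF assms, of n] by (simp add: nrm_scale mult_left_mono)
  then show "(\<lambda>k. c * x k) \<in> l2" "l2norm (\<lambda>k. c * x k) \<le> cmod c * l2norm x"
    using l2I_bound by blast+
qed

lemma l2_finite: assumes "\<And>k. k \<ge> M \<Longrightarrow> x k = 0"
  shows "x \<in> l2" "l2norm x = nrm M x"
proof -
  have b: "nrm n x \<le> nrm M x" for n using nrm_supp_le[of M x] assms by blast
  show x: "x \<in> l2" using l2I_bound(1)[OF b] .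
  show "l2norm x = nrm M x"
    using l2I_bound(2)[OF b] l2_nrm_le[OF x, of M] by linarith
qed

definition Pr :: "nat \<Rightarrow> (nat \<Rightarrow> complex) \<Rightarrow> nat \<Rightarrow> complex" where
  "Pr M x = (\<lambda>k. if k < M then x k else 0)"
definition Tl :: "nat \<Rightarrow> (nat \<Rightarrow> complex) \<Rightarrow> nat \<Rightarrow> complex" where
  "Tl M x = (\<lambda>k. if k < M then 0 else x k)"

lemma Pr_l2: "Pr M x \<in> l2" by (rule l2_finite[of M]) (simp add: Pr_def)

lemma Tl_l2: assumes "x \<in> l2" shows "Tl M x \<in> l2"
  and "(\<lambda>M. l2norm (Tl M x)) \<longlonglongrightarrow> 0"
proof -
  let ?g = "\<lambda>k. (cmod (x k))\<^sup>2"
  have sg: "summable ?g" using assms by (simp add: l2_def)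
  have st: "summable (\<lambda>k. (cmod (Tl M x k))\<^sup>2)" for M
    by (rule summable_comparison_test'[OF sg, of 0]) (auto simp: Tl_def)
  then show "Tl M x \<in> l2" by (simp add: l2_def)
  have sp: "summable (\<lambda>k. (cmod (Pr M x k))\<^sup>2)" for M
    by (rule summable_comparison_test'[OF sg, of 0]) (auto simp: Pr_def)
  have "(\<Sum>k. (cmod (Tl M x k))\<^sup>2) = (\<Sum>k. ?g k) - (\<Sum>k<M. ?g k)" for M
  proof -
    have "(\<Sum>k. ?g k) = (\<Sum>k. (cmod (Pr M x k))\<^sup>2 + (cmod (Tl M x k))\<^sup>2)"
      by (rule suminf_cong) (auto simp: Pr_def Tl_def)
    also have "\<dots> = (\<Sum>k. (cmod (Pr M x k))\<^sup>2) + (\<Sum>k. (cmod (Tl M x k))\<^sup>2)"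
      by (rule suminf_add[OF sp st, symmetric])
    also have "(\<Sum>k. (cmod (Pr M x k))\<^sup>2) = (\<Sum>k<M. ?g k)"
      by (subst suminf_finite[of "{..<M}"]) (auto simp: Pr_def)
    finally show ?thesis by simp
  qed
  then have eq: "l2norm (Tl M x) = sqrt ((\<Sum>k. ?g k) - (\<Sum>k<M. ?g k))" for M
    by (simp add: l2norm_def)
  have "(\<lambda>M. (\<Sum>k. ?g k) - (\<Sum>k<M. ?g k)) \<longlonglongrightarrow> (\<Sum>k. ?g k) - (\<Sum>k. ?g k)"
    by (intro tendsto_intros summable_LIMSEQ sg)
  then have "(\<lambda>M. sqrt ((\<Sum>k. ?g k) - (\<Sum>k<M. ?g k))) \<longlonglongrightarrow> sqrt 0"
    by (intro tendsto_real_sqrt) simp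
  then show "(\<lambda>M. l2norm (Tl M x)) \<longlonglongrightarrow> 0" by (simp add: eq)
qed

lemma Pr_Tl: "x k = Pr M x k + Tl M x k" by (simp add: Pr_def Tl_def)




definition Fm :: "nat \<Rightarrow> (nat \<Rightarrow> nat \<Rightarrow> complex) \<Rightarrow> (nat \<Rightarrow> complex) \<Rightarrow> nat \<Rightarrow> complex" where
  "Fm M A v = (\<lambda>k. \<Sum>l<M. A k l * v l)"

definition qf :: "nat \<Rightarrow> (nat \<Rightarrow> nat \<Rightarrow> complex) \<Rightarrow> (nat \<Rightarrow> complex) \<Rightarrow> (nat \<Rightarrow> complex) \<Rightarrow> complex" where
  "qf M A u v = (\<Sum>k<M. cnj (u k) * Fm M A v k)"

lemma qf_double: "qf M A a b = (\<Sum>k<M. \<Sum>l<M. cnj (a k) * A k l * b l)"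
  by (simp add: qf_def Fm_def sum_distrib_left mult.assoc)

lemma qf_polar: "4 * qf M A u w = qf M A (\<lambda>k. u k + w k) (\<lambda>k. u k + w k)
   - qf M A (\<lambda>k. u k - w k) (\<lambda>k. u k - w k)
   - \<i> * qf M A (\<lambda>k. u k + \<i> * w k) (\<lambda>k. u k + \<i> * w k)
   + \<i> * qf M A (\<lambda>k. u k - \<i> * w k) (\<lambda>k. u k - \<i> * w k)"
proof -
  have pt: "4 * (cnj a * X * d) = cnj (a + c) * X * (b + d) - cnj (a - c) * X * (b - d)
     - \<i> * (cnj (a + \<i> * c) * X * (b + \<i> * d)) + \<i> * (cnj (a - \<i> * c) * X * (b - \<i> * d))"
    if "True" for a b c d X :: complex
    by (simp add: algebra_simps)
  show ?thesis unfolding qf_double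
    apply (simp only: sum_distrib_left)
    apply (simp only: sum_subtractf[symmetric] sum.distrib[symmetric])
    apply (rule sum.cong[OF refl], rule sum.cong[OF refl])
    apply (rule pt)
    apply simp
    done
qed

lemma par_pt: "(cmod (a+b))\<^sup>2 + (cmod (a-b))\<^sup>2 + (cmod (a + \<i>*b))\<^sup>2 + (cmod (a - \<i>*b))\<^sup>2
   = 4*(cmod a)\<^sup>2 + 4*(cmod b)\<^sup>2"
  by (simp only: cmod_power2) (simp add: power2_eq_square algebra_simps)

lemma nrm_par: "(nrm M (\<lambda>k. u k + w k))\<^sup>2 + (nrm M (\<lambda>k. u k - w k))\<^sup>2
   + (nrm M (\<lambda>k. u k + \<i> * w k))\<^sup>2 + (nrm M (\<lambda>k. u k - \<i> * w k))\<^sup>2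
   = 4 * (nrm M u)\<^sup>2 + 4 * (nrm M w)\<^sup>2"
  unfolding nrm_sq by (simp add: sum.distrib[symmetric] sum_distrib_left par_pt)

lemma norm4: "cmod (a - b - c + d) \<le> cmod a + cmod b + cmod c + cmod d"
proof -
  have "cmod (a - b - c + d) \<le> cmod (a - b - c) + cmod d" by (rule norm_triangle_ineq)
  also have "cmod (a - b - c) \<le> cmod (a - b) + cmod c" by (rule norm_triangle_ineq4)
  also have "cmod (a - b) \<le> cmod a + cmod b" by (rule norm_triangle_ineq4)
  finally show ?thesis by simp
qed

lemma cnj_self_sum: "(\<Sum>k<M. cnj (w k) * w k) = complex_of_real ((nrm M w)\<^sup>2)"
proof -
  have pt: "cnj z * z = complex_of_real ((cmod z)\<^sup>2)" for z
    using complex_norm_square[of z] by (simp add: mult.commute)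
  show ?thesis unfolding nrm_sq of_real_sum by (simp only: pt)
qed

lemma cmod_diff_scale_sq: "(cmod (a - complex_of_real t * b))\<^sup>2 =
    (cmod a)\<^sup>2 - 2 * t * Re (cnj a * b) + t\<^sup>2 * (cmod b)\<^sup>2"
  by (simp only: cmod_power2) (simp add: power2_eq_square algebra_simps)

locale fovq =
  fixes A :: "nat \<Rightarrow> nat \<Rightarrow> complex" and M0 :: nat and r :: real
  assumes r0: "0 \<le> r" and r1: "r < 1"
    and Q: "\<And>M v. M0 < M \<Longrightarrow> cmod (qf M A v v) \<le> r * (nrm M v)\<^sup>2"
begin

definition "K2 = r / (1 - r)"
definition "Cst = 1 + sqrt K2"
definition "tt = (1 - r) / Cst\<^sup>2"
definition "qq = sqrt (1 - (1 - r)\<^sup>2 / Cst\<^sup>2)"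

lemma K2_nonneg: "0 \<le> K2" using r0 r1 by (simp add: K2_def)
lemma Cst_ge1: "1 \<le> Cst" using K2_nonneg by (simp add: Cst_def)
lemma tt_pos: "0 < tt" using Cst_ge1 r1 by (simp add: tt_def)
lemma qq_bounds: "0 \<le> qq" "qq < 1" "qq\<^sup>2 = 1 - (1 - r)\<^sup>2 / Cst\<^sup>2"
proof -
  have c: "(1 - r)\<^sup>2 \<le> Cst\<^sup>2" using Cst_ge1 r0 r1 by (intro power_mono) auto
  have c2: "0 < (1 - r)\<^sup>2 / Cst\<^sup>2" using Cst_ge1 r1 by simp
  have c3: "(1 - r)\<^sup>2 / Cst\<^sup>2 \<le> 1" using c Cst_ge1 by simp
  show "0 \<le> qq" using c3 by (simp add: qq_def)
  show "qq < 1" using c2 c3 by (simp add: qq_def)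
  show "qq\<^sup>2 = 1 - (1 - r)\<^sup>2 / Cst\<^sup>2" using c3 by (simp add: qq_def)
qed

lemma polar_bound: assumes "M0 < M"
  shows "cmod (qf M A u w) \<le> r * ((nrm M u)\<^sup>2 + (nrm M w)\<^sup>2)"
proof -
  let ?q = "\<lambda>v. qf M A v v"
  have "4 * cmod (qf M A u w) = cmod (4 * qf M A u w)" by (simp add: norm_mult)
  also have "\<dots> \<le> cmod (?q (\<lambda>k. u k + w k)) + cmod (?q (\<lambda>k. u k - w k))
      + cmod (\<i> * ?q (\<lambda>k. u k + \<i> * w k)) + cmod (\<i> * ?q (\<lambda>k. u k - \<i> * w k))"
    unfolding qf_polar by (rule norm4)
  also have "\<dots> \<le> r * (nrm M (\<lambda>k. u k + w k))\<^sup>2 + r * (nrm M (\<lambda>k. u k - w k))\<^sup>2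
      + r * (nrm M (\<lambda>k. u k + \<i> * w k))\<^sup>2 + r * (nrm M (\<lambda>k. u k - \<i> * w k))\<^sup>2"
    using Q[OF assms] by (intro add_mono) (auto simp: norm_mult)
  also have "\<dots> = r * (4 * (nrm M u)\<^sup>2 + 4 * (nrm M w)\<^sup>2)"
    by (subst nrm_par[symmetric]) (simp add: algebra_simps)
  finally have "4 * cmod (qf M A u w) \<le> 4 * (r * ((nrm M u)\<^sup>2 + (nrm M w)\<^sup>2))"
    by (simp add: algebra_simps)
  then show ?thesis by simp
qed

lemma Fm_bound: assumes "M0 < M" shows "nrm M (Fm M A u) \<le> sqrt K2 * nrm M u"
proof -
  define w where "w = Fm M A u"
  have "qf M A w u = complex_of_real ((nrm M w)\<^sup>2)"
    unfolding qf_def w_def by (rule cnj_self_sum)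
  then have "(nrm M w)\<^sup>2 \<le> r * ((nrm M w)\<^sup>2 + (nrm M u)\<^sup>2)"
    using polar_bound[OF assms, of w u] by (simp add: norm_power)
  then have "(1 - r) * (nrm M w)\<^sup>2 \<le> r * (nrm M u)\<^sup>2" by (simp add: algebra_simps)
  then have "(nrm M w)\<^sup>2 \<le> K2 * (nrm M u)\<^sup>2" using r1
    by (simp add: K2_def field_simps)
  also have "\<dots> = (sqrt K2 * nrm M u)\<^sup>2" using K2_nonneg by (simp add: power_mult_distrib)
  finally show ?thesis unfolding w_def
    by (rule power2_le_imp_le) (simp add: K2_nonneg)
qed

lemma IFm_bound: assumes "M0 < M" shows "nrm M (\<lambda>k. u k - Fm M A u k) \<le> Cst * nrm M u"
  using nrm_diff[of M u "Fm M A u"] Fm_bound[OF assms, of u] by (simp add: Cst_def algebra_simps)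

lemma coercive: assumes "M0 < M"
  shows "(1 - r) * (nrm M u)\<^sup>2 \<le> Re (\<Sum>k<M. cnj (u k) * (u k - Fm M A u k))"
proof -
  have "(\<Sum>k<M. cnj (u k) * (u k - Fm M A u k)) = (\<Sum>k<M. cnj (u k) * u k) - qf M A u u"
    by (simp add: qf_def right_diff_distrib sum_subtractf)
  then have "Re (\<Sum>k<M. cnj (u k) * (u k - Fm M A u k)) = (nrm M u)\<^sup>2 - Re (qf M A u u)"
    by (simp add: cnj_self_sum)
  moreover have "Re (qf M A u u) \<le> r * (nrm M u)\<^sup>2"
    using complex_Re_le_cmod[of "qf M A u u"] Q[OF assms, of u] by linarith
  ultimately show ?thesis by (simp add: algebra_simps)
qed

lemma contr_fin: assumes "M0 < M"
  shows "nrm M (\<lambda>k. u k - complex_of_real tt * (u k - Fm M A u k)) \<le> qq * nrm M u"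
proof -
  define w where "w = (\<lambda>k. u k - Fm M A u k)"
  have "(nrm M (\<lambda>k. u k - complex_of_real tt * w k))\<^sup>2
      = (nrm M u)\<^sup>2 - 2 * tt * Re (\<Sum>k<M. cnj (u k) * w k) + tt\<^sup>2 * (nrm M w)\<^sup>2"
  proof -
    have e1: "(\<Sum>k<M. 2 * tt * Re (cnj (u k) * w k)) = 2 * tt * Re (\<Sum>k<M. cnj (u k) * w k)"
      by (simp only: Re_sum sum_distrib_left)
    have e2: "(\<Sum>k<M. tt\<^sup>2 * (cmod (w k))\<^sup>2) = tt\<^sup>2 * (\<Sum>k<M. (cmod (w k))\<^sup>2)"
      by (simp only: sum_distrib_left)
    show ?thesis
      unfolding nrm_sq cmod_diff_scale_sq sum.distrib sum_subtractf e1 e2 by simp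
  qed
  also have "\<dots> \<le> (nrm M u)\<^sup>2 - 2 * tt * ((1 - r) * (nrm M u)\<^sup>2) + tt\<^sup>2 * (Cst * nrm M u)\<^sup>2"
  proof -
    have "2 * tt * ((1 - r) * (nrm M u)\<^sup>2) \<le> 2 * tt * Re (\<Sum>k<M. cnj (u k) * w k)"
      using coercive[OF assms, of u] tt_pos unfolding w_def by simp
    moreover have "(nrm M w)\<^sup>2 \<le> (Cst * nrm M u)\<^sup>2"
      unfolding w_def by (rule power_mono[OF IFm_bound[OF assms]]) simp
    then have "tt\<^sup>2 * (nrm M w)\<^sup>2 \<le> tt\<^sup>2 * (Cst * nrm M u)\<^sup>2" by (simp add: mult_left_mono)
    ultimately show ?thesis by linarith
  qed
  also have "\<dots> = (qq * nrm M u)\<^sup>2"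
    using Cst_ge1 unfolding power_mult_distrib qq_bounds(3)
    by (simp add: tt_def field_simps power2_eq_square)
  finally show ?thesis unfolding w_def
    by (rule power2_le_imp_le) (simp add: qq_bounds)
qed

lemma lower_fin: assumes "M0 < M"
  shows "(1 - qq) * nrm M u \<le> tt * nrm M (\<lambda>k. u k - Fm M A u k)"
proof -
  define w where "w = (\<lambda>k. u k - Fm M A u k)"
  have "nrm M u = nrm M (\<lambda>k. (u k - complex_of_real tt * w k) + complex_of_real tt * w k)" by simp
  also have "\<dots> \<le> nrm M (\<lambda>k. u k - complex_of_real tt * w k) + nrm M (\<lambda>k. complex_of_real tt * w k)"
    by (rule nrm_triangle)
  also have "\<dots> \<le> qq * nrm M u + tt * nrm M w"
    using contr_fin[OF assms, of u] tt_pos unfolding w_def by (simp add: nrm_scale)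
  finally show ?thesis unfolding w_def by (simp add: algebra_simps)
qed

end



lemma l2norm_zero[simp]: "l2norm (\<lambda>k. 0) = 0" by (simp add: l2norm_def)

lemma l2norm_minus_commute: "l2norm (\<lambda>k. x k - y k) = l2norm (\<lambda>k. y k - x k)"
  by (simp add: l2norm_def norm_minus_commute)

lemma zero_l2: "(\<lambda>k. 0) \<in> l2" by (rule l2_finite[of 0]) simp

lemma nrm_tendsto: assumes "\<And>k. (\<lambda>m. X m k) \<longlonglongrightarrow> x k"
  shows "(\<lambda>m. nrm n (X m)) \<longlonglongrightarrow> nrm n x"
  unfolding nrm_def L2_set_def
  by (intro tendsto_real_sqrt tendsto_sum tendsto_power tendsto_norm assms)

lemma l2_complete:
  assumes xs: "\<And>j. xs j \<in> l2" and q: "0 \<le> q" "q < 1"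
    and d: "\<And>j. l2norm (\<lambda>k. xs (Suc j) k - xs j k) \<le> D * q ^ j"
  shows "\<exists>x\<in>l2. (\<lambda>j. l2norm (\<lambda>k. xs j k - x k)) \<longlonglongrightarrow> 0"
proof -
  have D0: "0 \<le> D" using d[of 0] l2norm_nonneg[OF l2_diff(1)[OF xs xs]] by (metis order_trans power_0 mult_1_right)
  define E where "E j = D * q ^ j / (1 - q)" for j
  have step: "l2norm (\<lambda>k. xs (j + i) k - xs j k) \<le> D * q ^ j * (\<Sum>p<i. q ^ p)" for i j
  proof (induction i)
    case 0 then show ?case by simp
  next
    case (Suc i)
    have "l2norm (\<lambda>k. xs (j + Suc i) k - xs j k)
        = l2norm (\<lambda>k. (xs (Suc (j + i)) k - xs (j + i) k) + (xs (j + i) k - xs j k))" by simp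
    also have "\<dots> \<le> l2norm (\<lambda>k. xs (Suc (j + i)) k - xs (j + i) k) + l2norm (\<lambda>k. xs (j + i) k - xs j k)"
      by (rule l2_add(2)) (auto intro: l2_diff xs)
    also have "\<dots> \<le> D * q ^ (j + i) + D * q ^ j * (\<Sum>p<i. q ^ p)"
      using d[of "j + i"] Suc by linarith
    also have "\<dots> = D * q ^ j * (\<Sum>p<Suc i. q ^ p)" by (simp add: power_add algebra_simps)
    finally show ?case .
  qed
  have geo: "(\<Sum>p<i. q ^ p) \<le> 1 / (1 - q)" for i
  proof -
    have "(\<Sum>p<i. q ^ p) = (1 - q ^ i) / (1 - q)" using q
      by (subst geometric_sum) (auto simp: field_simps)
    also have "\<dots> \<le> 1 / (1 - q)" using q by (intro divide_right_mono) auto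
    finally show ?thesis .
  qed
  have cb: "l2norm (\<lambda>k. xs m k - xs j k) \<le> E j" if jm: "j \<le> m" for j m
  proof -
    obtain i where m: "m = j + i" using le_Suc_ex[OF jm] by blast
    have "l2norm (\<lambda>k. xs m k - xs j k) \<le> D * q ^ j * (\<Sum>p<i. q ^ p)" using step[of j i] m by simp
    also have "\<dots> \<le> D * q ^ j * (1 / (1 - q))"
      using geo D0 q by (intro mult_left_mono) auto
    finally show ?thesis by (simp add: E_def)
  qed
  have E0: "E \<longlonglongrightarrow> 0"
  proof -
    have "(\<lambda>j. D * q ^ j / (1 - q)) \<longlonglongrightarrow> D * 0 / (1 - q)"
      using q by (intro tendsto_intros) auto
    then show ?thesis by (simp add: E_def[abs_def])
  qed
  have pw: "cmod (xs m k - xs j k) \<le> E j" if "j \<le> m" for j m k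
    using coord_le_l2norm[OF l2_diff(1)[OF xs[of m] xs[of j]], of k] cb[OF that] by linarith
  have cauchy: "Cauchy (\<lambda>j. xs j k)" for k
  proof (rule metric_CauchyI)
    fix e :: real assume "0 < e"
    then have "0 < e / 2" by simp
    from E0[unfolded LIMSEQ_def, rule_format, OF this] obtain N where N: "\<And>n. n \<ge> N \<Longrightarrow> dist (E n) 0 < e / 2" by blast
    have EN: "E N < e / 2" using N[of N] by simp
    show "\<exists>M. \<forall>m\<ge>M. \<forall>n\<ge>M. dist (xs m k) (xs n k) < e"
    proof (intro exI allI impI)
      fix m n assume "N \<le> m" "N \<le> n"
      have "dist (xs m k) (xs n k) \<le> cmod (xs m k - xs N k) + cmod (xs n k - xs N k)"
      proof -
        have "xs m k - xs n k = (xs m k - xs N k) - (xs n k - xs N k)" by simp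
        then show ?thesis by (metis dist_norm norm_triangle_ineq4)
      qed
      also have "\<dots> < e" using pw[OF \<open>N \<le> m\<close>, of k] pw[OF \<open>N \<le> n\<close>, of k] EN by linarith
      finally show "dist (xs m k) (xs n k) < e" .
    qed
  qed
  define x where "x k = lim (\<lambda>j. xs j k)" for k
  have lx: "(\<lambda>j. xs j k) \<longlonglongrightarrow> x k" for k
    using cauchy[of k] by (simp add: x_def Cauchy_convergent_iff convergent_LIMSEQ_iff)
  have bd: "nrm n (\<lambda>k. xs j k - x k) \<le> E j" for j n
  proof -
    have "(\<lambda>m. nrm n (\<lambda>k. xs m k - xs j k)) \<longlonglongrightarrow> nrm n (\<lambda>k. x k - xs j k)"
      by (intro nrm_tendsto tendsto_intros lx)
    moreover have "\<exists>N. \<forall>m\<ge>N. nrm n (\<lambda>k. xs m k - xs j k) \<le> E j"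
      using cb l2_nrm_le[OF l2_diff(1)[OF xs xs]] by (meson order_trans)
    ultimately have "nrm n (\<lambda>k. x k - xs j k) \<le> E j" by (rule LIMSEQ_le_const2)
    then show ?thesis by (simp add: nrm_minus_commute)
  qed
  have dl2: "(\<lambda>k. xs j k - x k) \<in> l2" "l2norm (\<lambda>k. xs j k - x k) \<le> E j" for j
    using l2I_bound[OF bd] by auto
  have "(\<lambda>k. xs 0 k - (xs 0 k - x k)) \<in> l2" by (rule l2_diff(1)[OF xs dl2(1)])
  then have xl2: "x \<in> l2" by simp
  have "(\<lambda>j. l2norm (\<lambda>k. xs j k - x k)) \<longlonglongrightarrow> 0"
  proof (rule tendsto_sandwich[OF _ _ tendsto_const E0])
    show "\<forall>\<^sub>F n in sequentially. 0 \<le> l2norm (\<lambda>k. xs n k - x k)"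
      using dl2(1) by simp
    show "\<forall>\<^sub>F n in sequentially. l2norm (\<lambda>k. xs n k - x k) \<le> E n"
      using dl2(2) by simp
  qed
  then show ?thesis using xl2 by blast
qed



context fovq begin

lemma row_bound: "(\<Sum>l<L. (cmod (A k l))\<^sup>2) \<le> K2"
proof -
  define M where "M = max (Suc k) (max L (Suc M0))"
  define u where "u = (\<lambda>l. if l < L then cnj (A k l) else 0)"
  define s where "s = (\<Sum>l<L. (cmod (A k l))\<^sup>2)"
  have M: "M0 < M" "k < M" "L \<le> M" by (auto simp: M_def)
  have s0: "0 \<le> s" by (simp add: s_def sum_nonneg)
  have "Fm M A u k = (\<Sum>l<L. A k l * u l)"
    unfolding Fm_def using M by (intro sum.mono_neutral_right) (auto simp: u_def)
  also have "\<dots> = (\<Sum>l<L. complex_of_real ((cmod (A k l))\<^sup>2))"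
  proof (intro sum.cong refl)
    fix l assume "l \<in> {..<L}"
    then show "A k l * u l = complex_of_real ((cmod (A k l))\<^sup>2)"
      using complex_norm_square[of "A k l"] by (simp add: u_def)
  qed
  finally have F: "Fm M A u k = complex_of_real s" by (simp add: s_def)
  have "nrm M u = nrm L u" by (rule nrm_supp) (auto simp: u_def M)
  also have "\<dots> = sqrt s" unfolding nrm_def L2_set_def s_def
    by (intro arg_cong[where f=sqrt] sum.cong) (auto simp: u_def)
  finally have nu: "nrm M u = sqrt s" .
  have "s = cmod (Fm M A u k)" using F s0 by simp
  also have "\<dots> \<le> nrm M (Fm M A u)" by (rule coord_le_nrm) (use M in auto)
  also have "\<dots> \<le> sqrt K2 * sqrt s" using Fm_bound[OF M(1), of u] nu by simp
  finally have le: "sqrt s * sqrt s \<le> sqrt K2 * sqrt s" using s0 by simp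
  show ?thesis
  proof (cases "s = 0")
    case True then show ?thesis using K2_nonneg by (simp add: s_def)
  next
    case False
    then have "0 < sqrt s" using s0 by simp
    then have "sqrt s \<le> sqrt K2" using le by (rule mult_right_le_imp_le[rotated])
    then have "s \<le> K2" by simp
    then show ?thesis by (simp add: s_def)
  qed
qed

lemma row_summable: "summable (\<lambda>l. (cmod (A k l))\<^sup>2)"
  by (rule summableI_nonneg_bounded[OF _ row_bound]) simp

lemma mult_summable: assumes "x \<in> l2" shows "summable (\<lambda>l. A k l * x l)"
proof (rule summable_comparison_test'[of "\<lambda>l. ((cmod (A k l))\<^sup>2 + (cmod (x l))\<^sup>2) / 2" 0])
  show "summable (\<lambda>l. ((cmod (A k l))\<^sup>2 + (cmod (x l))\<^sup>2) / 2)"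
    using row_summable[of k] assms by (intro summable_divide summable_add) (auto simp: l2_def)
  show "cmod (A k l * x l) \<le> ((cmod (A k l))\<^sup>2 + (cmod (x l))\<^sup>2) / 2" for l
    using sum_squares_bound[of "cmod (A k l)" "cmod (x l)"] by (simp add: norm_mult)
qed

lemma Fi_fin: assumes "\<And>l. l \<ge> M \<Longrightarrow> x l = 0" shows "(\<Sum>l. A k l * x l) = Fm M A x k"
  unfolding Fm_def by (rule suminf_finite) (auto simp: assms)

lemma B_diff: assumes "x \<in> l2" "y \<in> l2"
  shows "id_minus_mat A (\<lambda>k. x k - y k) = (\<lambda>k. id_minus_mat A x k - id_minus_mat A y k)"
proof
  fix k
  have "(\<Sum>l. A k l * (x l - y l)) = (\<Sum>l. A k l * x l - A k l * y l)" by (simp add: right_diff_distrib)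
  also have "\<dots> = (\<Sum>l. A k l * x l) - (\<Sum>l. A k l * y l)"
    by (rule suminf_diff[OF mult_summable[OF assms(1)] mult_summable[OF assms(2)], symmetric])
  finally show "id_minus_mat A (\<lambda>k. x k - y k) k = id_minus_mat A x k - id_minus_mat A y k"
    by (simp add: id_minus_mat_def)
qed

lemma Fi_bound: assumes "x \<in> l2"
  shows "(\<lambda>k. \<Sum>l. A k l * x l) \<in> l2" "l2norm (\<lambda>k. \<Sum>l. A k l * x l) \<le> sqrt K2 * l2norm x"
proof -
  have "nrm n (\<lambda>k. \<Sum>l. A k l * x l) \<le> sqrt K2 * l2norm x" for n
  proof -
    have "(\<lambda>L. nrm n (Fm L A x)) \<longlonglongrightarrow> nrm n (\<lambda>k. \<Sum>l. A k l * x l)"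
      by (intro nrm_tendsto) (simp add: Fm_def summable_LIMSEQ mult_summable[OF assms])
    moreover have "nrm n (Fm L A x) \<le> sqrt K2 * l2norm x" for L
    proof -
      define M where "M = max n (max L (Suc M0))"
      have M: "M0 < M" "n \<le> M" "L \<le> M" by (auto simp: M_def)
      have e: "Fm L A x = Fm M A (Pr L x)"
        unfolding Fm_def using M by (intro ext sum.mono_neutral_cong_left) (auto simp: Pr_def)
      have "nrm n (Fm L A x) \<le> nrm M (Fm M A (Pr L x))" unfolding e by (rule nrm_mono[OF M(2)])
      also have "\<dots> \<le> sqrt K2 * nrm M (Pr L x)" by (rule Fm_bound[OF M(1)])
      also have "nrm M (Pr L x) = nrm L (Pr L x)" by (rule nrm_supp) (auto simp: Pr_def M)
      also have "\<dots> = nrm L x" by (rule nrm_cong) (simp add: Pr_def)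
      also have "sqrt K2 * nrm L x \<le> sqrt K2 * l2norm x"
        by (intro mult_left_mono l2_nrm_le[OF assms]) (simp add: K2_nonneg)
      finally show ?thesis by simp
    qed
    ultimately show ?thesis by (intro LIMSEQ_le_const2) auto
  qed
  then show "(\<lambda>k. \<Sum>l. A k l * x l) \<in> l2" "l2norm (\<lambda>k. \<Sum>l. A k l * x l) \<le> sqrt K2 * l2norm x"
    using l2I_bound by blast+
qed

lemma B_l2: assumes "x \<in> l2"
  shows "id_minus_mat A x \<in> l2" "l2norm (id_minus_mat A x) \<le> Cst * l2norm x"
proof -
  have e: "id_minus_mat A x = (\<lambda>k. x k - (\<Sum>l. A k l * x l))" by (simp add: id_minus_mat_def[abs_def])
  show "id_minus_mat A x \<in> l2" unfolding e by (rule l2_diff(1)[OF assms Fi_bound(1)[OF assms]])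
  have "l2norm (id_minus_mat A x) \<le> l2norm x + l2norm (\<lambda>k. \<Sum>l. A k l * x l)"
    unfolding e by (rule l2_diff(2)[OF assms Fi_bound(1)[OF assms]])
  then show "l2norm (id_minus_mat A x) \<le> Cst * l2norm x"
    using Fi_bound(2)[OF assms] by (simp add: Cst_def algebra_simps)
qed

lemma B_Pr: "k < M \<Longrightarrow> id_minus_mat A (Pr M x) k = Pr M x k - Fm M A (Pr M x) k"
  unfolding id_minus_mat_def by (subst Fi_fin[of M]) (auto simp: Pr_def)

lemma contr_l2: assumes x: "x \<in> l2"
  shows "(\<lambda>k. x k - complex_of_real tt * id_minus_mat A x k) \<in> l2"
    "l2norm (\<lambda>k. x k - complex_of_real tt * id_minus_mat A x k) \<le> qq * l2norm x"
proof -
  let ?B = "id_minus_mat A"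
  let ?g = "\<lambda>k. x k - complex_of_real tt * ?B x k"
  show gl2: "?g \<in> l2" by (intro l2_diff(1) l2_scale(1) B_l2 x)
  have bnd: "nrm M ?g \<le> qq * l2norm x + tt * Cst * l2norm (Tl M x)" if M: "M0 < M" for M
  proof -
    define u where "u = Pr M x"
    define v where "v = Tl M x"
    have vl2: "v \<in> l2" unfolding v_def by (rule Tl_l2(1)[OF x])
    have uv: "u = (\<lambda>k. x k - v k)" by (auto simp: u_def v_def Pr_def Tl_def)
    have Bu: "?B u = (\<lambda>k. ?B x k - ?B v k)" unfolding uv by (rule B_diff[OF x vl2])
    have "nrm M ?g = nrm M (\<lambda>k. (u k - complex_of_real tt * (u k - Fm M A u k)) - complex_of_real tt * ?B v k)"
    proof (rule nrm_cong)
      fix k assume k: "k < M"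
      have "?B u k = u k - Fm M A u k" unfolding u_def by (rule B_Pr[OF k])
      moreover have "u k = x k" using k by (simp add: u_def Pr_def)
      ultimately show "?g k = (u k - complex_of_real tt * (u k - Fm M A u k)) - complex_of_real tt * ?B v k"
      proof -
        have "?B x k = ?B u k + ?B v k" using Bu by (simp add: fun_eq_iff)
        then have H: "?B x k = (u k - Fm M A u k) + ?B v k" using \<open>?B u k = u k - Fm M A u k\<close> by simp
        show ?thesis unfolding H \<open>u k = x k\<close> by (simp add: algebra_simps)
      qed
    qed
    also have "\<dots> \<le> nrm M (\<lambda>k. u k - complex_of_real tt * (u k - Fm M A u k)) + nrm M (\<lambda>k. complex_of_real tt * ?B v k)"
      by (rule nrm_diff)
    also have "\<dots> \<le> qq * nrm M u + tt * nrm M (?B v)"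
      using contr_fin[OF M, of u] tt_pos by (simp add: nrm_scale)
    also have "\<dots> \<le> qq * l2norm x + tt * (Cst * l2norm v)"
    proof -
      have "nrm M u = nrm M x" by (rule nrm_cong) (simp add: u_def Pr_def)
      then have "nrm M u \<le> l2norm x" using l2_nrm_le[OF x] by simp
      then have a: "qq * nrm M u \<le> qq * l2norm x" by (rule mult_left_mono) (simp add: qq_bounds)
      have "nrm M (?B v) \<le> Cst * l2norm v"
        using l2_nrm_le[OF B_l2(1)[OF vl2], of M] B_l2(2)[OF vl2] by linarith
      then have b: "tt * nrm M (?B v) \<le> tt * (Cst * l2norm v)" using tt_pos by simp
      show ?thesis using a b by linarith
    qed
    finally show ?thesis by (simp add: v_def mult.assoc)
  qed
  have "(\<lambda>M. nrm M ?g) \<longlonglongrightarrow> l2norm ?g" by (rule l2_nrm_lim[OF gl2])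
  moreover have "(\<lambda>M. qq * l2norm x + tt * Cst * l2norm (Tl M x)) \<longlonglongrightarrow> qq * l2norm x + tt * Cst * 0"
    by (intro tendsto_intros Tl_l2(2)[OF x])
  moreover have "\<exists>N. \<forall>M\<ge>N. nrm M ?g \<le> qq * l2norm x + tt * Cst * l2norm (Tl M x)"
    using bnd by (intro exI[of _ "Suc M0"]) auto
  ultimately show "l2norm ?g \<le> qq * l2norm x" by (intro LIMSEQ_le) auto
qed

lemma lower_l2: assumes x: "x \<in> l2"
  shows "(1 - qq) * l2norm x \<le> tt * l2norm (id_minus_mat A x)"
proof -
  let ?B = "id_minus_mat A"
  let ?g = "\<lambda>k. x k - complex_of_real tt * ?B x k"
  have "l2norm x = l2norm (\<lambda>k. ?g k + complex_of_real tt * ?B x k)" by simp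
  also have "\<dots> \<le> l2norm ?g + l2norm (\<lambda>k. complex_of_real tt * ?B x k)"
    by (intro l2_add(2) contr_l2(1) x l2_scale(1) B_l2(1))
  also have "\<dots> \<le> qq * l2norm x + tt * l2norm (?B x)"
    using contr_l2(2)[OF x] l2_scale(2)[OF B_l2(1)[OF x], of "complex_of_real tt"] tt_pos by simp
  finally show ?thesis by (simp add: algebra_simps)
qed

lemma B_inj: assumes "x \<in> l2" "y \<in> l2" "id_minus_mat A x = id_minus_mat A y" shows "x = y"
proof
  fix k
  have d: "(\<lambda>k. x k - y k) \<in> l2" by (rule l2_diff(1)[OF assms(1,2)])
  have "id_minus_mat A (\<lambda>k. x k - y k) = (\<lambda>k. 0)" using B_diff[OF assms(1,2)] assms(3) by simp
  then have "(1 - qq) * l2norm (\<lambda>k. x k - y k) \<le> 0" using lower_l2[OF d] by simp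
  then have "l2norm (\<lambda>k. x k - y k) \<le> 0" using qq_bounds by (simp add: mult_le_0_iff)
  then show "x k = y k" using l2_zero[OF d, of k] by simp
qed

end



context fovq begin

lemma B_surj: assumes y: "y \<in> l2" shows "\<exists>x\<in>l2. id_minus_mat A x = y"
proof -
  let ?B = "id_minus_mat A"
  define T where "T z = (\<lambda>k. z k - complex_of_real tt * (?B z k - y k))" for z
  have Tl2: "T z \<in> l2" if z: "z \<in> l2" for z
  proof -
    have "T z = (\<lambda>k. (z k - complex_of_real tt * ?B z k) + complex_of_real tt * y k)"
      by (simp add: T_def algebra_simps fun_eq_iff)
    then show ?thesis using l2_add(1)[OF contr_l2(1)[OF z] l2_scale(1)[OF y]] by simp
  qed
  have Tc: "l2norm (\<lambda>k. T a k - T b k) \<le> qq * l2norm (\<lambda>k. a k - b k)" if ab: "a \<in> l2" "b \<in> l2" for a b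
  proof -
    have d: "(\<lambda>k. a k - b k) \<in> l2" by (rule l2_diff(1)[OF ab])
    have "(\<lambda>k. T a k - T b k) = (\<lambda>k. (a k - b k) - complex_of_real tt * ?B (\<lambda>k. a k - b k) k)"
      unfolding B_diff[OF ab] by (simp add: T_def fun_eq_iff algebra_simps)
    then show ?thesis using contr_l2(2)[OF d] by simp
  qed
  define xs where "xs j = (T ^^ j) (\<lambda>k. 0)" for j
  have xsl2: "xs j \<in> l2" for j by (induction j) (auto simp: xs_def zero_l2 Tl2)
  have xsS: "xs (Suc j) = T (xs j)" for j by (simp add: xs_def)
  define D where "D = l2norm (\<lambda>k. xs (Suc 0) k - xs 0 k)"
  have dd: "l2norm (\<lambda>k. xs (Suc j) k - xs j k) \<le> D * qq ^ j" for j
  proof (induction j)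
    case 0 then show ?case by (simp add: D_def)
  next
    case (Suc j)
    have "l2norm (\<lambda>k. xs (Suc (Suc j)) k - xs (Suc j) k) \<le> qq * l2norm (\<lambda>k. xs (Suc j) k - xs j k)"
      using Tc[OF xsl2[of "Suc j"] xsl2[of j]] by (simp only: xsS)
    also have "\<dots> \<le> qq * (D * qq ^ j)" using Suc qq_bounds by (intro mult_left_mono) auto
    finally show ?case by (simp add: algebra_simps)
  qed
  obtain x where x: "x \<in> l2" and lim: "(\<lambda>j. l2norm (\<lambda>k. xs j k - x k)) \<longlonglongrightarrow> 0"
    using l2_complete[OF xsl2 qq_bounds(1,2) dd] by blast
  have Tx: "T x \<in> l2" by (rule Tl2[OF x])
  have fix0: "l2norm (\<lambda>k. T x k - x k) \<le> 0"
  proof (rule LIMSEQ_le_const)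
    have "(\<lambda>j. qq * l2norm (\<lambda>k. xs j k - x k) + l2norm (\<lambda>k. xs (Suc j) k - x k)) \<longlonglongrightarrow> qq * 0 + 0"
      by (intro tendsto_intros lim LIMSEQ_Suc[OF lim])
    then show "(\<lambda>j. qq * l2norm (\<lambda>k. xs j k - x k) + l2norm (\<lambda>k. xs (Suc j) k - x k)) \<longlonglongrightarrow> 0"
      by simp
    show "\<exists>N. \<forall>j\<ge>N. l2norm (\<lambda>k. T x k - x k) \<le> qq * l2norm (\<lambda>k. xs j k - x k) + l2norm (\<lambda>k. xs (Suc j) k - x k)"
    proof -
      have bnd: "l2norm (\<lambda>k. T x k - x k) \<le> qq * l2norm (\<lambda>k. xs j k - x k) + l2norm (\<lambda>k. xs (Suc j) k - x k)" for j
      proof -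
      have "l2norm (\<lambda>k. T x k - x k) = l2norm (\<lambda>k. (T x k - T (xs j) k) + (xs (Suc j) k - x k))"
        by (simp add: xsS)
      also have "\<dots> \<le> l2norm (\<lambda>k. T x k - T (xs j) k) + l2norm (\<lambda>k. xs (Suc j) k - x k)"
        by (intro l2_add(2) l2_diff(1) Tx Tl2 xsl2 x)
      finally have a: "l2norm (\<lambda>k. T x k - x k) \<le> l2norm (\<lambda>k. T x k - T (xs j) k) + l2norm (\<lambda>k. xs (Suc j) k - x k)" .
      have "l2norm (\<lambda>k. T x k - T (xs j) k) \<le> qq * l2norm (\<lambda>k. x k - xs j k)"
        by (rule Tc[OF x xsl2[of j]])
      also have "\<dots> = qq * l2norm (\<lambda>k. xs j k - x k)" by (simp add: l2norm_minus_commute[of x])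
      finally show ?thesis using a by linarith
      qed
      then show ?thesis by blast
    qed
  qed
  have "?B x = y"
  proof
    fix k
    have "T x k - x k = 0" using l2_zero[OF l2_diff(1)[OF Tx x] fix0] by simp
    then have "complex_of_real tt * (?B x k - y k) = 0" by (simp add: T_def)
    then show "?B x k = y k" using tt_pos by simp
  qed
  then show ?thesis using x by blast
qed

end

lemma sum_restrict: fixes M M' :: nat assumes "M \<le> M'" shows "(\<Sum>l<M'. if l < M then g l else 0) = (\<Sum>l<M. g l)"
proof -
  have "(\<Sum>l\<in>{..<M'} \<inter> {..<M}. g l) = (\<Sum>l<M'. if l < M then g l else 0)"
    by (subst sum.inter_restrict) auto
  moreover have "{..<M'} \<inter> {..<M} = {..<M}" using assms by auto
  ultimately show ?thesis by simp
qed

lemma fov_Q: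
  assumes fov: "\<forall>M>M0. field_of_values M A \<subseteq> {z. cmod z \<le> r}" and M: "M0 < M"
  shows "cmod (qf M A v v) \<le> r * (nrm M v)\<^sup>2"
proof (cases "nrm M v = 0")
  case True
  then have "v k = 0" if "k < M" for k using coord_le_nrm[OF that, of v] by simp
  then have "qf M A v v = 0" by (simp add: qf_def)
  then show ?thesis using True by simp
next
  case False
  define s where "s = nrm M v"
  have s: "0 < s" using False by (simp add: s_def order_less_le)
  define w where "w k = complex_of_real (1 / s) * v k" for k
  have "nrm M w = 1" using s unfolding w_def[abs_def] nrm_scale by (simp add: s_def norm_divide)
  then have w1: "(\<Sum>k<M. (cmod (w k))\<^sup>2) = 1" by (simp add: nrm_sq[symmetric])
  have "(\<Sum>k<M. \<Sum>l<M. cnj (w k) * A k l * w l) \<in> field_of_values M A"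
    unfolding field_of_values_def using w1 by blast
  then have le1: "cmod (qf M A w w) \<le> r" using fov M by (auto simp: qf_double)
  have "qf M A w w = complex_of_real ((1 / s)\<^sup>2) * qf M A v v"
    unfolding qf_double w_def by (simp add: sum_distrib_left algebra_simps power2_eq_square)
  then have "cmod (qf M A w w) = (1 / s)\<^sup>2 * cmod (qf M A v v)" using s by (simp add: norm_mult norm_power norm_divide)
  then have "cmod (qf M A v v) / s\<^sup>2 \<le> r" using le1 by (simp add: power_divide)
  then show ?thesis using s by (simp add: s_def pos_divide_le_eq)
qed

lemma fov_r0:
  assumes fov: "\<forall>M>M0. field_of_values M A \<subseteq> {z. cmod z \<le> r}"
  shows "0 \<le> r"
proof -
  have "cmod (qf (Suc M0) A (\<lambda>k. 1) (\<lambda>k. 1)) \<le> r * (nrm (Suc M0) (\<lambda>k. 1))\<^sup>2"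
    by (rule fov_Q[OF fov]) simp
  moreover have "(nrm (Suc M0) (\<lambda>k. 1))\<^sup>2 = real (Suc M0)" by (simp add: nrm_sq)
  ultimately have "0 \<le> r * real (Suc M0)" by (metis norm_ge_zero order_trans)
  then show ?thesis by (simp add: zero_le_mult_iff)
qed

lemma restrict_fovq:
  assumes "fovq A M0 r" "M0 < M"
  shows "fovq (\<lambda>k l. if k < M \<and> l < M then A k l else 0) M r"
proof -
  interpret fovq A M0 r by fact
  show ?thesis
  proof
    show "0 \<le> r" by (rule r0)
    show "r < 1" by (rule r1)
    fix M' v assume M': "M < M'"
    have "qf M' (\<lambda>k l. if k < M \<and> l < M then A k l else 0) v v
        = (\<Sum>k<M'. if k < M then (\<Sum>l<M'. if l < M then cnj (v k) * A k l * v l else 0) else 0)"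
      unfolding qf_double by (intro sum.cong refl) (auto intro!: sum.cong)
    also have "\<dots> = qf M A v v" unfolding qf_double using M'
      by (simp add: sum_restrict)
    finally have e: "qf M' (\<lambda>k l. if k < M \<and> l < M then A k l else 0) v v = qf M A v v" .
    have "cmod (qf M A v v) \<le> r * (nrm M v)\<^sup>2" by (rule Q[OF assms(2)])
    also have "\<dots> \<le> r * (nrm M' v)\<^sup>2"
      using M' r0 by (intro mult_left_mono power_mono nrm_mono) auto
    finally show "cmod (qf M' (\<lambda>k l. if k < M \<and> l < M then A k l else 0) v v) \<le> r * (nrm M' v)\<^sup>2"
      using e by simp
  qed
qed


theorem theorem4p1:
  fixes f :: "real \<Rightarrow> complex" and N M0 :: nat and r :: real
  assumes analytic: "\<exists>S g. open S \<and> complex_of_real ` {-1..1} \<subseteq> S \<and> g holomorphic_on S \<and>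
                        (\<forall>t\<in>{-1..1}. f t = g (complex_of_real t))"
    and r_lt: "r < 1"
    and fov: "\<forall>M>M0. field_of_values M (coeff_matrix f N) \<subseteq> {z. cmod z \<le> r}"
  shows "(\<exists>C. \<forall>x\<in>l2. l2norm (id_minus_mat (coeff_matrix f N) x) \<le> C * l2norm x)
       \<and> bij_betw (id_minus_mat (coeff_matrix f N)) l2 l2
       \<and> (\<exists>C. \<forall>y\<in>l2. l2norm (inv_into l2 (id_minus_mat (coeff_matrix f N)) y) \<le> C * l2norm y)
       \<and> (\<forall>y\<in>l2. \<forall>x\<in>l2. id_minus_mat (coeff_matrix f N) x = y \<longrightarrow>
            (\<forall>M>M0. \<exists>!v. (\<forall>k\<ge>M. v k = 0) \<and>
                 (\<forall>k<M. v k - (\<Sum>l<M. coeff_matrix f N k l * v l) = y k))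
          \<and> (\<forall>xs :: nat \<Rightarrow> nat \<Rightarrow> complex.
               (\<forall>M>M0. (\<forall>k\<ge>M. xs M k = 0) \<and>
                  (\<forall>k<M. xs M k - (\<Sum>l<M. coeff_matrix f N k l * xs M l) = y k))
               \<longrightarrow> (\<lambda>M. l2norm (\<lambda>k. xs M k - x k)) \<longlonglongrightarrow> 0))"
proof -
  define A where "A = coeff_matrix f N"
  have fovA: "\<forall>M>M0. field_of_values M A \<subseteq> {z. cmod z \<le> r}" using fov by (simp add: A_def)
  interpret fovq A M0 r
  proof
    show "0 \<le> r" by (rule fov_r0[OF fovA])
    show "r < 1" by (rule r_lt)
    show "cmod (qf M A v v) \<le> r * (nrm M v)\<^sup>2" if "M0 < M" for M v by (rule fov_Q[OF fovA that])
  qed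
  have fq: "fovq A M0 r" by unfold_locales
  let ?B = "id_minus_mat A"
  have inj: "inj_on ?B l2" by (rule inj_onI) (rule B_inj)
  have c1: "\<exists>C. \<forall>x\<in>l2. l2norm (?B x) \<le> C * l2norm x" using B_l2(2) by blast
  have c2: "bij_betw ?B l2 l2"
    unfolding bij_betw_def
  proof
    show "inj_on ?B l2" by (rule inj)
    show "?B ` l2 = l2" using B_l2(1) B_surj by blast
  qed
  have c3: "\<exists>C. \<forall>y\<in>l2. l2norm (inv_into l2 ?B y) \<le> C * l2norm y"
  proof (intro exI ballI)
    fix y assume y: "y \<in> l2"
    obtain x where x: "x \<in> l2" "?B x = y" using B_surj[OF y] by blast
    have "inv_into l2 ?B y = x" using inv_into_f_f[OF inj x(1)] x(2) by simp
    moreover have "(1 - qq) * l2norm x \<le> tt * l2norm y" using lower_l2[OF x(1)] x(2) by simp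
    then have "l2norm x \<le> tt / (1 - qq) * l2norm y" using qq_bounds
      by (simp add: field_simps)
    ultimately show "l2norm (inv_into l2 ?B y) \<le> tt / (1 - qq) * l2norm y" by simp
  qed
  have c4: "(\<forall>M>M0. \<exists>!v. (\<forall>k\<ge>M. v k = 0) \<and> (\<forall>k<M. v k - (\<Sum>l<M. A k l * v l) = y k))
          \<and> (\<forall>xs :: nat \<Rightarrow> nat \<Rightarrow> complex.
               (\<forall>M>M0. (\<forall>k\<ge>M. xs M k = 0) \<and> (\<forall>k<M. xs M k - (\<Sum>l<M. A k l * xs M l) = y k))
               \<longrightarrow> (\<lambda>M. l2norm (\<lambda>k. xs M k - x k)) \<longlonglongrightarrow> 0)"
    if y: "y \<in> l2" and x: "x \<in> l2" and Bx: "?B x = y" for x y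
  proof (intro conjI allI impI)
    fix M assume M: "M0 < M"
    show "\<exists>!v. (\<forall>k\<ge>M. v k = 0) \<and> (\<forall>k<M. v k - (\<Sum>l<M. A k l * v l) = y k)"
    proof (rule ex_ex1I)
      define A' where "A' = (\<lambda>k l. if k < M \<and> l < M then A k l else 0)"
      interpret G: fovq A' M r unfolding A'_def by (rule restrict_fovq[OF fq M])
      obtain z where z: "z \<in> l2" "id_minus_mat A' z = Pr M y" using G.B_surj[OF Pr_l2] by blast
      have s: "(\<Sum>l. A' k l * z l) = (if k < M then (\<Sum>l<M. A k l * z l) else 0)" for k
      proof -
        have "(\<Sum>l. A' k l * z l) = (\<Sum>l<M. A' k l * z l)"
          by (rule suminf_finite) (auto simp: A'_def)
        then show ?thesis by (auto simp: A'_def)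
      qed
      have zk: "z k - (\<Sum>l. A' k l * z l) = Pr M y k" for k
        using z(2) by (simp add: id_minus_mat_def fun_eq_iff)
      show "\<exists>v. (\<forall>k\<ge>M. v k = 0) \<and> (\<forall>k<M. v k - (\<Sum>l<M. A k l * v l) = y k)"
      proof (intro exI conjI allI impI)
        fix k assume "M \<le> k" then show "z k = 0" using zk[of k] s[of k] by (simp add: Pr_def)
      next
        fix k assume "k < M" then show "z k - (\<Sum>l<M. A k l * z l) = y k"
          using zk[of k] s[of k] by (simp add: Pr_def)
      qed
    next
      fix v w
      assume v: "(\<forall>k\<ge>M. v k = 0) \<and> (\<forall>k<M. v k - (\<Sum>l<M. A k l * v l) = y k)"
        and w: "(\<forall>k\<ge>M. w k = 0) \<and> (\<forall>k<M. w k - (\<Sum>l<M. A k l * w l) = y k)"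
      define d where "d = (\<lambda>k. v k - w k)"
      have "nrm M (\<lambda>k. d k - Fm M A d k) = nrm M (\<lambda>k. 0)"
      proof (rule nrm_cong)
        fix k assume k: "k < M"
        have "Fm M A d k = (\<Sum>l<M. A k l * v l) - (\<Sum>l<M. A k l * w l)"
          by (simp add: Fm_def d_def right_diff_distrib sum_subtractf)
        then show "d k - Fm M A d k = 0" using v w k by (simp add: d_def algebra_simps)
      qed
      moreover have "nrm M (\<lambda>k. 0) = 0" by (simp add: nrm_def L2_set_def)
      ultimately have "(1 - qq) * nrm M d \<le> 0" using lower_fin[OF M, of d] by simp
      then have "nrm M d \<le> 0" using qq_bounds by (simp add: mult_le_0_iff)
      then have "d k = 0" if "k < M" for k using coord_le_nrm[OF that, of d]
        by (metis norm_le_zero_iff order_trans)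
      then show "v = w" using v w by (auto simp: d_def fun_eq_iff) (metis not_less)
    qed
  next
    fix xs :: "nat \<Rightarrow> nat \<Rightarrow> complex"
    assume xs: "\<forall>M>M0. (\<forall>k\<ge>M. xs M k = 0) \<and> (\<forall>k<M. xs M k - (\<Sum>l<M. A k l * xs M l) = y k)"
    define K where "K = tt * Cst / (1 - qq) + 1"
    have bnd: "(\<lambda>k. xs M k - x k) \<in> l2 \<and> l2norm (\<lambda>k. xs M k - x k) \<le> K * l2norm (Tl M x)"
      if M: "M0 < M" for M
    proof -
      define e where "e = (\<lambda>k. xs M k - Pr M x k)"
      have ez: "e k = 0" if "k \<ge> M" for k using xs M that by (simp add: e_def Pr_def)
      have tl2: "Tl M x \<in> l2" by (rule Tl_l2(1)[OF x])
      have BT: "?B (Tl M x) = (\<lambda>k. ?B x k - ?B (Pr M x) k)"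
      proof -
        have "Tl M x = (\<lambda>k. x k - Pr M x k)" by (auto simp: Tl_def Pr_def)
        then show ?thesis using B_diff[OF x Pr_l2] by simp
      qed
      have "nrm M (\<lambda>k. e k - Fm M A e k) = nrm M (?B (Tl M x))"
      proof (rule nrm_cong)
        fix k assume k: "k < M"
        have F1: "Fm M A e k = Fm M A (xs M) k - Fm M A (Pr M x) k"
          by (simp add: Fm_def e_def right_diff_distrib sum_subtractf)
        have F2: "xs M k - Fm M A (xs M) k = y k" using xs M k by (simp add: Fm_def)
        have F3: "Pr M x k - Fm M A (Pr M x) k = ?B (Pr M x) k" by (rule B_Pr[OF k, symmetric])
        have "e k - Fm M A e k = (xs M k - Fm M A (xs M) k) - (Pr M x k - Fm M A (Pr M x) k)"
          unfolding F1 by (simp add: e_def algebra_simps)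
        also have "\<dots> = ?B x k - ?B (Pr M x) k" unfolding F2 F3 Bx ..
        finally show "e k - Fm M A e k = ?B (Tl M x) k" unfolding BT by simp
      qed
      also have "\<dots> \<le> Cst * l2norm (Tl M x)"
        using l2_nrm_le[OF B_l2(1)[OF tl2], of M] B_l2(2)[OF tl2] by linarith
      finally have "(1 - qq) * nrm M e \<le> tt * (Cst * l2norm (Tl M x))"
        using lower_fin[OF M, of e] tt_pos by (meson mult_left_mono less_imp_le order_trans)
      then have ne: "nrm M e \<le> tt * Cst / (1 - qq) * l2norm (Tl M x)"
        using qq_bounds by (simp add: field_simps)
      have el2: "e \<in> l2" "l2norm e = nrm M e" using l2_finite[of M e] ez by auto
      have eq: "(\<lambda>k. xs M k - x k) = (\<lambda>k. e k - Tl M x k)" by (auto simp: e_def Pr_def Tl_def)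
      show ?thesis unfolding eq
        using l2_diff[OF el2(1) tl2] el2(2) ne by (simp add: K_def algebra_simps)
    qed
    show "(\<lambda>M. l2norm (\<lambda>k. xs M k - x k)) \<longlonglongrightarrow> 0"
    proof (rule tendsto_sandwich[of "\<lambda>M. 0" _ _ "\<lambda>M. K * l2norm (Tl M x)"])
      show "\<forall>\<^sub>F M in sequentially. 0 \<le> l2norm (\<lambda>k. xs M k - x k)"
        using bnd unfolding eventually_sequentially
        by (intro exI[of _ "Suc M0"]) (auto intro: l2norm_nonneg)
      show "\<forall>\<^sub>F M in sequentially. l2norm (\<lambda>k. xs M k - x k) \<le> K * l2norm (Tl M x)"
        using bnd unfolding eventually_sequentially by (intro exI[of _ "Suc M0"]) auto
      show "(\<lambda>M. 0) \<longlonglongrightarrow> (0::real)" by simp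
      have "(\<lambda>M. K * l2norm (Tl M x)) \<longlonglongrightarrow> K * 0" by (intro tendsto_intros Tl_l2(2)[OF x])
      then show "(\<lambda>M. K * l2norm (Tl M x)) \<longlonglongrightarrow> 0" by simp
    qed
  qed
  show ?thesis unfolding A_def[symmetric] using c1 c2 c3 c4 by blast
qed


end
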